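(* Let $\mathcal I$ be the set of all infinitely divisible real random variables $X$ with $E[X^2]<\infty$, and let $\mathcal I_0=\{X\in\mathcal I: \mathrm{Var}(X)>0\}$. Define $$P_{\mathcal I}=\inf_{X\in\mathcal I}P\left\{|X-E[X]|\le \sqrt{\mathrm{Var}(X)}\right\},\qquad P_{\mathcal I_0}=\inf_{X\in\mathcal I_0}P\left\{|X-E[X]|<\sqrt{\mathrm{Var}(X)}\right\}.$$ Then $P_{\mathcal I}\ge P_{\mathcal I_0}>0$. Moreover, there exists $Y\in\mathcal I_0$ such that $P_{\mathcal I_0}=P\{|Y-E[Y]|<\sqrt{\mathrm{Var}(Y)}\}$.
   Context: A real random variable (or its distribution) is infinitely divisible if for every $n\ge1$ its distribution equals that of a sum of $n$ i.i.d. random variables. *)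

theory Defs
  imports "HOL-Probability.Probability"
begin

text \<open>A real random variable is identified with its distribution; all quantities in the
  statement (mean, variance, probabilities of events about X) depend only on it.\<close>

definition real_distribution :: "real measure \<Rightarrow> bool" where
  "real_distribution \<mu> \<longleftrightarrow> prob_space \<mu> \<and> sets \<mu> = sets borel"

definition iid_sum_distr :: "nat \<Rightarrow> real measure \<Rightarrow> real measure" where
  "iid_sum_distr n \<nu> = distr (PiM {..<n} (\<lambda>_. \<nu>)) borel (\<lambda>x. \<Sum>i<n. x i)"

definition infinitely_divisible :: "real measure \<Rightarrow> bool" where
  "infinitely_divisible \<mu> \<longleftrightarrow>
     (\<forall>n::nat. n \<ge> 1 \<longrightarrow> (\<exists>\<nu>. real_distribution \<nu> \<and> \<mu> = iid_sum_distr n \<nu>))"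

definition mean :: "real measure \<Rightarrow> real" where
  "mean \<mu> = (\<integral>x. x \<partial>\<mu>)"

definition var :: "real measure \<Rightarrow> real" where
  "var \<mu> = (\<integral>x. (x - mean \<mu>)\<^sup>2 \<partial>\<mu>)"

definition ID_class :: "real measure set" where
  "ID_class = {\<mu>. real_distribution \<mu> \<and> infinitely_divisible \<mu> \<and> integrable \<mu> (\<lambda>x. x\<^sup>2)}"

definition ID0_class :: "real measure set" where
  "ID0_class = {\<mu> \<in> ID_class. var \<mu> > 0}"

definition P_I :: real where
  "P_I = (INF \<mu>\<in>ID_class. measure \<mu> {x. \<bar>x - mean \<mu>\<bar> \<le> sqrt (var \<mu>)})"

definition P_I0 :: real where
  "P_I0 = (INF \<mu>\<in>ID0_class. measure \<mu> {x. \<bar>x - mean \<mu>\<bar> < sqrt (var \<mu>)})"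

end

theory Submission
  imports Defs
begin

lemma rd_iff: "real_distribution \<mu> \<longleftrightarrow> Distribution_Functions.real_distribution \<mu>"
  by (simp add: Defs.real_distribution_def Distribution_Functions.real_distribution_def
      real_distribution_axioms_def)

lemma iid_rd:
  assumes "real_distribution \<nu>"
  shows "real_distribution (iid_sum_distr n \<nu>)"
proof -
  interpret prob_space \<nu> using assms by (simp add: Defs.real_distribution_def)
  have sP: "sets (PiM {..<n} (\<lambda>_. \<nu>)) = sets (PiM {..<n} (\<lambda>_. borel))"
    using assms by (intro sets_PiM_cong) (simp_all add: Defs.real_distribution_def)
  have "prob_space (PiM {..<n} (\<lambda>_. \<nu>))" by (intro prob_space_PiM) (rule prob_space_axioms)
  moreover have "(\<lambda>x. \<Sum>i<n. x i :: real) \<in> measurable (PiM {..<n} (\<lambda>_. \<nu>)) borel"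
    by (subst measurable_cong_sets[OF sP refl]) measurable
  ultimately show ?thesis unfolding iid_sum_distr_def Defs.real_distribution_def
    by (simp add: prob_space.prob_space_distr)
qed

lemma iexp_sum_prod: fixes t :: real and n :: nat shows "iexp (t * (\<Sum>i<n. x i)) = (\<Prod>i<n. iexp (t * x i))"
  by (simp add: sum_distrib_left exp_sum)

lemma iexp_affine: fixes t :: real shows "iexp (t * (a * x + b)) = iexp (t * b) * iexp ((a * t) * x)"
proof -
  have "\<i> * complex_of_real (t * (a * x + b)) = \<i> * complex_of_real (t * b) + \<i> * complex_of_real ((a * t) * x)"
    by (simp add: algebra_simps)
  then show ?thesis by (simp only: exp_add)
qed

lemma iid_char:
  assumes "real_distribution \<nu>"
  shows "char (iid_sum_distr n \<nu>) t = char \<nu> t ^ n"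
proof -
  interpret prob_space \<nu> using assms by (simp add: Defs.real_distribution_def)
  interpret P: product_sigma_finite "\<lambda>_. \<nu>"
    by (simp add: product_sigma_finite_def sigma_finite_measure_axioms)
  have sP: "sets (PiM {..<n} (\<lambda>_. \<nu>)) = sets (PiM {..<n} (\<lambda>_. borel))"
    using assms by (intro sets_PiM_cong) (simp_all add: Defs.real_distribution_def)
  have sN: "sets \<nu> = sets borel" using assms by (simp add: Defs.real_distribution_def)
  have m: "(\<lambda>x. \<Sum>i<n. x i :: real) \<in> measurable (PiM {..<n} (\<lambda>_. \<nu>)) borel"
    by (subst measurable_cong_sets[OF sP refl]) measurable
  have "char (iid_sum_distr n \<nu>) t = (\<integral>x. iexp (t * (\<Sum>i<n. x i)) \<partial>PiM {..<n} (\<lambda>_. \<nu>))"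
    unfolding char_def iid_sum_distr_def by (simp add: integral_distr m)
  also have "\<dots> = (\<integral>x. (\<Prod>i<n. iexp (t * x i)) \<partial>PiM {..<n} (\<lambda>_. \<nu>))"
    by (rule Bochner_Integration.integral_cong[OF refl]) (rule iexp_sum_prod)
  also have "\<dots> = (\<Prod>i<n. char \<nu> t)"
    unfolding char_def
    apply (rule P.product_integral_prod[where f="\<lambda>i y. iexp (t * y)"])
     apply simp
    apply (rule integrable_iexp)
     apply (simp add: measurable_cong_sets[OF sN refl])
    by simp
  finally show ?thesis by simp
qed

lemma char_affine:
  assumes "real_distribution \<mu>"
  shows "char (distr \<mu> borel (\<lambda>x. a * x + b)) t = iexp (t * b) * char \<mu> (a * t)"
proof -
  have "char (distr \<mu> borel (\<lambda>x. a * x + b)) t = (CLINT x|\<mu>. iexp (t * (a * x + b)))"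
    unfolding char_def
  proof (rule integral_distr)
    have sM: "sets \<mu> = sets borel" using assms by (simp add: Defs.real_distribution_def)
    show "(\<lambda>x. a * x + b) \<in> measurable \<mu> borel"
      unfolding measurable_cong_sets[OF sM refl] by measurable
    show "(\<lambda>x. iexp (t * x)) \<in> borel_measurable borel" by measurable
  qed
  also have "\<dots> = (CLINT x|\<mu>. iexp (t * b) * iexp ((a * t) * x))"
    by (rule Bochner_Integration.integral_cong[OF refl]) (rule iexp_affine)
  also have "\<dots> = iexp (t * b) * char \<mu> (a * t)"
    unfolding char_def by simp
  finally show ?thesis .
qed

lemma rd_affine:
  assumes "real_distribution \<mu>"
  shows "real_distribution (distr \<mu> borel (\<lambda>x. a * x + b))"
proof -
  have sM: "sets \<mu> = sets borel" using assms by (simp add: Defs.real_distribution_def)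
  have "(\<lambda>x. a * x + b) \<in> measurable \<mu> borel"
    unfolding measurable_cong_sets[OF sM refl] by measurable
  then show ?thesis using assms unfolding Defs.real_distribution_def
    by (simp add: prob_space.prob_space_distr)
qed

lemma ID_affine:
  assumes "real_distribution \<mu>" "infinitely_divisible \<mu>"
  shows "infinitely_divisible (distr \<mu> borel (\<lambda>x. a * x + b))"
  unfolding infinitely_divisible_def
proof (intro allI impI)
  fix n :: nat assume n: "n \<ge> 1"
  then obtain \<nu> where \<nu>: "real_distribution \<nu>" "\<mu> = iid_sum_distr n \<nu>"
    using assms(2) unfolding infinitely_divisible_def by blast
  define \<nu>' where "\<nu>' = distr \<nu> borel (\<lambda>x. a * x + b / n)"
  have r': "real_distribution \<nu>'" unfolding \<nu>'_def by (rule rd_affine[OF \<nu>(1)])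
  have "distr \<mu> borel (\<lambda>x. a * x + b) = iid_sum_distr n \<nu>'"
  proof (rule Levy_uniqueness)
    show "Distribution_Functions.real_distribution (distr \<mu> borel (\<lambda>x. a * x + b))"
      using rd_affine[OF assms(1)] rd_iff by blast
    show "Distribution_Functions.real_distribution (iid_sum_distr n \<nu>')"
      using iid_rd[OF r'] rd_iff by blast
    show "char (distr \<mu> borel (\<lambda>x. a * x + b)) = char (iid_sum_distr n \<nu>')"
    proof
      fix t
      have e: "iexp (t * (b / n)) ^ n = iexp (t * b)"
      proof -
        have "iexp (t * (b / n)) ^ n = exp (of_nat n * (\<i> * complex_of_real (t * (b / n))))"
          by (simp only: exp_of_nat_mult)
        also have "of_nat n * (\<i> * complex_of_real (t * (b / n))) = \<i> * complex_of_real (t * b)"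
          using n by (simp add: field_simps)
        finally show ?thesis by simp
      qed
      show "char (distr \<mu> borel (\<lambda>x. a * x + b)) t = char (iid_sum_distr n \<nu>') t"
      proof -
        have "char (iid_sum_distr n \<nu>') t = char \<nu>' t ^ n" by (rule iid_char[OF r'])
        also have "\<dots> = (iexp (t * (b / n)) * char \<nu> (a * t)) ^ n"
          unfolding \<nu>'_def by (simp only: char_affine[OF \<nu>(1)])
        also have "\<dots> = iexp (t * b) * char \<nu> (a * t) ^ n"
          by (simp only: power_mult_distrib e)
        also have "\<dots> = char (distr \<mu> borel (\<lambda>x. a * x + b)) t"
          using char_affine[OF assms(1), of a b t] iid_char[OF \<nu>(1), of n "a*t"] \<nu>(2) by simp
        finally show ?thesis by simp
      qed
    qed
  qed
  then show "\<exists>\<nu>. real_distribution \<nu> \<and> distr \<mu> borel (\<lambda>x. a * x + b) = iid_sum_distr n \<nu>"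
    using r' by blast
qed

lemma sets_rd: "real_distribution \<nu> \<Longrightarrow> sets \<nu> = sets borel"
  by (simp add: Defs.real_distribution_def)

lemma ps_rd: "real_distribution \<nu> \<Longrightarrow> prob_space \<nu>"
  by (simp add: Defs.real_distribution_def)

lemma cheb:
  assumes rd: "real_distribution \<nu>" and int: "integrable \<nu> (\<lambda>x. x\<^sup>2)" and c: "c > 0"
  shows "measure \<nu> {x. c \<le> \<bar>x\<bar>} \<le> (\<integral>x. x\<^sup>2 \<partial>\<nu>) / c\<^sup>2"
proof -
  interpret prob_space \<nu> using rd by (rule ps_rd)
  have sM: "sets \<nu> = sets borel" using rd by (rule sets_rd)
  have meas: "{x. c \<le> \<bar>x\<bar>} \<in> sets \<nu>" unfolding sM by measurable
  have "c\<^sup>2 * measure \<nu> {x. c \<le> \<bar>x\<bar>} = (\<integral>x. c\<^sup>2 * indicator {x. c \<le> \<bar>x\<bar>} x \<partial>\<nu>)"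
    using meas by simp
  also have "\<dots> \<le> (\<integral>x. x\<^sup>2 \<partial>\<nu>)"
  proof (rule integral_mono[OF _ int])
    show "integrable \<nu> (\<lambda>x. c\<^sup>2 * indicator {x. c \<le> \<bar>x\<bar>} x :: real)"
      using meas by (intro integrable_mult_right integrable_real_indicator) (auto simp: less_top[symmetric])
    fix x :: real
    show "c\<^sup>2 * indicator {x. c \<le> \<bar>x\<bar>} x \<le> x\<^sup>2"
    proof (cases "c \<le> \<bar>x\<bar>")
      case True
      then have "c\<^sup>2 \<le> \<bar>x\<bar>\<^sup>2" using c by (intro power_mono) auto
      then show ?thesis using True by simp
    qed simp
  qed
  finally show ?thesis using c by (simp add: field_simps)
qed

lemma measure_PiM_PiE_const:
  assumes rd: "real_distribution \<nu>" and A: "A \<in> sets borel"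
  shows "measure (PiM {..<k} (\<lambda>_. \<nu>)) (PiE {..<k} (\<lambda>_. A)) = measure \<nu> A ^ k"
proof -
  interpret prob_space \<nu> using rd by (rule ps_rd)
  interpret P: product_sigma_finite "\<lambda>_. \<nu>"
    by (simp add: product_sigma_finite_def sigma_finite_measure_axioms)
  have sM: "sets \<nu> = sets borel" using rd by (rule sets_rd)
  have "emeasure (PiM {..<k} (\<lambda>_. \<nu>)) (PiE {..<k} (\<lambda>_. A)) = (\<Prod>i<k. emeasure \<nu> A)"
    using A sM by (intro P.emeasure_PiM) auto
  also have "\<dots> = ennreal (measure \<nu> A ^ k)"
    by (simp add: emeasure_eq_measure prod_ennreal ennreal_power)
  finally show ?thesis by (simp add: measure_def)
qed

lemma iid_upper_tail:
  assumes rd: "real_distribution \<nu>" and k: "k \<ge> 1"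
  shows "measure \<nu> {c<..} ^ k \<le> measure (iid_sum_distr k \<nu>) {real k * c<..}"
proof -
  interpret prob_space \<nu> using rd by (rule ps_rd)
  interpret P: prob_space "PiM {..<k} (\<lambda>_. \<nu>)" by (intro prob_space_PiM) (rule prob_space_axioms)
  have sN: "sets \<nu> = sets borel" using rd by (rule sets_rd)
  have spN: "space \<nu> = UNIV" using sets_eq_imp_space_eq[OF sN] by simp
  have sP: "sets (PiM {..<k} (\<lambda>_. \<nu>)) = sets (PiM {..<k} (\<lambda>_. borel))"
    using sN by (intro sets_PiM_cong) simp_all
  have m: "(\<lambda>x. \<Sum>i<k. x i :: real) \<in> measurable (PiM {..<k} (\<lambda>_. \<nu>)) borel"
    by (subst measurable_cong_sets[OF sP refl]) measurable
  have "measure \<nu> {c<..} ^ k = measure (PiM {..<k} (\<lambda>_. \<nu>)) (PiE {..<k} (\<lambda>_. {c<..}))"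
    by (rule measure_PiM_PiE_const[symmetric, OF rd]) simp
  also have "\<dots> \<le> measure (PiM {..<k} (\<lambda>_. \<nu>)) ((\<lambda>x. \<Sum>i<k. x i) -` {real k * c<..} \<inter> space (PiM {..<k} (\<lambda>_. \<nu>)))"
  proof (rule P.finite_measure_mono)
    show "(\<lambda>x. \<Sum>i<k. x i) -` {real k * c<..} \<inter> space (PiM {..<k} (\<lambda>_. \<nu>)) \<in> sets (PiM {..<k} (\<lambda>_. \<nu>))"
      using m by (rule measurable_sets) simp
    show "PiE {..<k} (\<lambda>_. {c<..}) \<subseteq> (\<lambda>x. \<Sum>i<k. x i) -` {real k * c<..} \<inter> space (PiM {..<k} (\<lambda>_. \<nu>))"
    proof
      fix x assume x: "x \<in> PiE {..<k} (\<lambda>_. {c<..})"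
      have "(\<Sum>i<k. c) < (\<Sum>i<k. x i)"
        using x k by (intro sum_strict_mono) (auto simp: PiE_iff lessThan_empty_iff)
      then show "x \<in> (\<lambda>x. \<Sum>i<k. x i) -` {real k * c<..} \<inter> space (PiM {..<k} (\<lambda>_. \<nu>))"
        using x by (auto simp: space_PiM PiE_iff spN)
    qed
  qed
  also have "\<dots> = measure (iid_sum_distr k \<nu>) {real k * c<..}"
    unfolding iid_sum_distr_def by (rule measure_distr[symmetric, OF m]) simp
  finally show ?thesis .
qed

lemma iid_lower_tail:
  assumes rd: "real_distribution \<nu>" and k: "k \<ge> 1"
  shows "measure \<nu> {..c} ^ k \<le> measure (iid_sum_distr k \<nu>) {..real k * c}"
proof -
  interpret prob_space \<nu> using rd by (rule ps_rd)
  interpret P: prob_space "PiM {..<k} (\<lambda>_. \<nu>)" by (intro prob_space_PiM) (rule prob_space_axioms)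
  have sN: "sets \<nu> = sets borel" using rd by (rule sets_rd)
  have spN: "space \<nu> = UNIV" using sets_eq_imp_space_eq[OF sN] by simp
  have sP: "sets (PiM {..<k} (\<lambda>_. \<nu>)) = sets (PiM {..<k} (\<lambda>_. borel))"
    using sN by (intro sets_PiM_cong) simp_all
  have m: "(\<lambda>x. \<Sum>i<k. x i :: real) \<in> measurable (PiM {..<k} (\<lambda>_. \<nu>)) borel"
    by (subst measurable_cong_sets[OF sP refl]) measurable
  have "measure \<nu> {..c} ^ k = measure (PiM {..<k} (\<lambda>_. \<nu>)) (PiE {..<k} (\<lambda>_. {..c}))"
    by (rule measure_PiM_PiE_const[symmetric, OF rd]) simp
  also have "\<dots> \<le> measure (PiM {..<k} (\<lambda>_. \<nu>)) ((\<lambda>x. \<Sum>i<k. x i) -` {..real k * c} \<inter> space (PiM {..<k} (\<lambda>_. \<nu>)))"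
  proof (rule P.finite_measure_mono)
    show "(\<lambda>x. \<Sum>i<k. x i) -` {..real k * c} \<inter> space (PiM {..<k} (\<lambda>_. \<nu>)) \<in> sets (PiM {..<k} (\<lambda>_. \<nu>))"
      using m by (rule measurable_sets) simp
    show "PiE {..<k} (\<lambda>_. {..c}) \<subseteq> (\<lambda>x. \<Sum>i<k. x i) -` {..real k * c} \<inter> space (PiM {..<k} (\<lambda>_. \<nu>))"
    proof
      fix x assume x: "x \<in> PiE {..<k} (\<lambda>_. {..c})"
      have "(\<Sum>i<k. x i) \<le> (\<Sum>i<k. c)"
        using x by (intro sum_mono) (auto simp: PiE_iff)
      then show "x \<in> (\<lambda>x. \<Sum>i<k. x i) -` {..real k * c} \<inter> space (PiM {..<k} (\<lambda>_. \<nu>))"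
        using x by (auto simp: space_PiM PiE_iff spN)
    qed
  qed
  also have "\<dots> = measure (iid_sum_distr k \<nu>) {..real k * c}"
    unfolding iid_sum_distr_def by (rule measure_distr[symmetric, OF m]) simp
  finally show ?thesis .
qed

lemma tight_iid_factor:
  assumes rd: "\<And>n. real_distribution (\<nu> n)" and k: "k \<ge> 1"
    and int: "\<And>n. integrable (iid_sum_distr k (\<nu> n)) (\<lambda>x. x\<^sup>2)"
    and bnd: "\<And>n. (\<integral>x. x\<^sup>2 \<partial>iid_sum_distr k (\<nu> n)) \<le> C"
  shows "tight \<nu>"
  unfolding tight_def
proof (intro conjI allI impI)
  show "Distribution_Functions.real_distribution (\<nu> n)" for n using rd rd_iff by blast
  fix \<epsilon> :: real assume e: "\<epsilon> > 0"
  define d where "d = (\<epsilon> / 2) ^ k"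
  have d: "d > 0" using e by (simp add: d_def)
  define c where "c = (sqrt (\<bar>C\<bar> / d) + 1) / real k"
  have kpos: "real k > 0" using k by simp
  have q: "0 \<le> \<bar>C\<bar> / d" using d by (intro divide_nonneg_pos) auto
  have sq: "sqrt (\<bar>C\<bar> / d) \<ge> 0" using d by simp
  have c: "c > 0" unfolding c_def by (rule divide_pos_pos[OF add_nonneg_pos[OF sq] kpos]) simp
  have kc: "real k * c = sqrt (\<bar>C\<bar> / d) + 1" using kpos by (simp add: c_def)
  have kc2: "\<bar>C\<bar> / (real k * c)\<^sup>2 < d"
  proof -
    have "\<bar>C\<bar> / d < (sqrt (\<bar>C\<bar> / d) + 1)\<^sup>2"
    proof -
      have "\<bar>C\<bar> / d = (sqrt (\<bar>C\<bar> / d))\<^sup>2" using q by simp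
      also have "\<dots> < (sqrt (\<bar>C\<bar> / d) + 1)\<^sup>2" using sq by (intro power_strict_mono) auto
      finally show ?thesis .
    qed
    then have h1: "\<bar>C\<bar> < (sqrt (\<bar>C\<bar> / d) + 1)\<^sup>2 * d" by (simp only: pos_divide_less_eq[OF d])
    have p: "(sqrt (\<bar>C\<bar> / d) + 1)\<^sup>2 > 0" using sq by (intro zero_less_power) linarith
    have "\<bar>C\<bar> / (sqrt (\<bar>C\<bar> / d) + 1)\<^sup>2 < d" using h1 by (simp only: pos_divide_less_eq[OF p] mult_ac)
    then show ?thesis unfolding kc .
  qed
  have tail: "measure (iid_sum_distr k (\<nu> n)) {x. real k * c \<le> \<bar>x\<bar>} < d" for n
  proof -
    have "measure (iid_sum_distr k (\<nu> n)) {x. real k * c \<le> \<bar>x\<bar>}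
        \<le> (\<integral>x. x\<^sup>2 \<partial>iid_sum_distr k (\<nu> n)) / (real k * c)\<^sup>2"
      using kpos c by (intro cheb iid_rd rd int) simp
    also have "\<dots> \<le> \<bar>C\<bar> / (real k * c)\<^sup>2"
      using bnd[of n] by (intro divide_right_mono) auto
    finally show ?thesis using kc2 by simp
  qed
  have hi: "measure (\<nu> n) {c<..} < \<epsilon> / 2" for n
  proof -
    interpret I: prob_space "iid_sum_distr k (\<nu> n)" using iid_rd[OF rd] ps_rd by blast
    have sI: "sets (iid_sum_distr k (\<nu> n)) = sets borel" using iid_rd[OF rd] sets_rd by blast
    have "measure (\<nu> n) {c<..} ^ k \<le> measure (iid_sum_distr k (\<nu> n)) {real k * c<..}"
      by (rule iid_upper_tail[OF rd k])
    also have "\<dots> \<le> measure (iid_sum_distr k (\<nu> n)) {x. real k * c \<le> \<bar>x\<bar>}"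
      by (rule I.finite_measure_mono) (force, simp add: sI)
    also have "\<dots> < (\<epsilon> / 2) ^ k" using tail[of n] by (simp add: d_def)
    finally have "measure (\<nu> n) {c<..} ^ k < (\<epsilon> / 2) ^ k" .
    then show ?thesis by (rule power_less_imp_less_base) (use e in simp)
  qed
  have lo: "measure (\<nu> n) {..-c} < \<epsilon> / 2" for n
  proof -
    interpret I: prob_space "iid_sum_distr k (\<nu> n)" using iid_rd[OF rd] ps_rd by blast
    have sI: "sets (iid_sum_distr k (\<nu> n)) = sets borel" using iid_rd[OF rd] sets_rd by blast
    have "measure (\<nu> n) {..-c} ^ k \<le> measure (iid_sum_distr k (\<nu> n)) {..real k * (-c)}"
      by (rule iid_lower_tail[OF rd k])
    also have "\<dots> \<le> measure (iid_sum_distr k (\<nu> n)) {x. real k * c \<le> \<bar>x\<bar>}"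
      by (rule I.finite_measure_mono) (force, simp add: sI)
    also have "\<dots> < (\<epsilon> / 2) ^ k" using tail[of n] by (simp add: d_def)
    finally have "measure (\<nu> n) {..-c} ^ k < (\<epsilon> / 2) ^ k" .
    then show ?thesis by (rule power_less_imp_less_base) (use e in simp)
  qed
  show "\<exists>a b. a < b \<and> (\<forall>n. 1 - \<epsilon> < measure (\<nu> n) {a<..b})"
  proof (intro exI conjI allI)
    show "- c < c" using c by simp
    fix n
    interpret N: prob_space "\<nu> n" using rd ps_rd by blast
    have sN: "sets (\<nu> n) = sets borel" using rd sets_rd by blast
    have "{-c<..c} = UNIV - ({..-c} \<union> {c<..})" using c by auto
    then have "measure (\<nu> n) {-c<..c} = 1 - measure (\<nu> n) ({..-c} \<union> {c<..})"
      using N.prob_compl[of "{..-c} \<union> {c<..}"] sN sets_eq_imp_space_eq[OF sN] by simp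
    moreover have "measure (\<nu> n) ({..-c} \<union> {c<..}) = measure (\<nu> n) {..-c} + measure (\<nu> n) {c<..}"
      using c by (intro N.finite_measure_Union) (auto simp: sN)
    ultimately show "1 - \<epsilon> < measure (\<nu> n) {-c<..c}" using hi[of n] lo[of n] by linarith
  qed
qed

lemma weak_conv_subseq:
  assumes "weak_conv_m \<mu> M" "strict_mono r"
  shows "weak_conv_m (\<mu> \<circ> r) M"
  using assms unfolding weak_conv_m_def weak_conv_def
  by (auto intro: LIMSEQ_subseq_LIMSEQ[unfolded comp_def] simp: comp_def)

lemma ID_closed:
  assumes rd: "\<And>n. real_distribution (\<mu> n)" and idv: "\<And>n. infinitely_divisible (\<mu> n)"
    and rdM: "real_distribution M" and wc: "weak_conv_m \<mu> M"
    and int: "\<And>n. integrable (\<mu> n) (\<lambda>x. x\<^sup>2)" and bnd: "\<And>n. (\<integral>x. x\<^sup>2 \<partial>\<mu> n) \<le> C"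
  shows "infinitely_divisible M"
  unfolding infinitely_divisible_def
proof (intro allI impI)
  fix k :: nat assume k: "k \<ge> 1"
  have "\<forall>n. \<exists>\<nu>. real_distribution \<nu> \<and> \<mu> n = iid_sum_distr k \<nu>"
    using idv k unfolding infinitely_divisible_def by blast
  then obtain \<nu> where \<nu>: "\<And>n. real_distribution (\<nu> n)" "\<And>n. \<mu> n = iid_sum_distr k (\<nu> n)"
    by metis
  have "tight \<nu>"
  proof (rule tight_iid_factor[OF \<nu>(1) k])
    show "integrable (iid_sum_distr k (\<nu> n)) (\<lambda>x. x\<^sup>2)" for n using int[of n] \<nu>(2)[of n] by simp
    show "(\<integral>x. x\<^sup>2 \<partial>iid_sum_distr k (\<nu> n)) \<le> C" for n using bnd[of n] \<nu>(2)[of n] by simp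
  qed
  moreover have "strict_mono (id :: nat \<Rightarrow> nat)" by (simp add: strict_mono_def)
  ultimately obtain r N where r: "strict_mono r" "Distribution_Functions.real_distribution N"
    "weak_conv_m (\<nu> \<circ> id \<circ> r) N"
    using tight_imp_convergent_subsubsequence by blast
  have rdN: "real_distribution N" using r(2) rd_iff by blast
  have wcr: "weak_conv_m (\<mu> \<circ> r) M" by (rule weak_conv_subseq[OF wc r(1)])
  have "char M = char (iid_sum_distr k N)"
  proof
    fix t
    have 1: "(\<lambda>j. char ((\<mu> \<circ> r) j) t) \<longlonglongrightarrow> char M t"
      by (rule levy_continuity1) (use rd rdM wcr rd_iff in \<open>auto simp: comp_def\<close>)
    have 2: "(\<lambda>j. char ((\<nu> \<circ> id \<circ> r) j) t) \<longlonglongrightarrow> char N t"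
      by (rule levy_continuity1) (use \<nu>(1) r rd_iff in \<open>auto simp: comp_def\<close>)
    then have "(\<lambda>j. char (\<nu> (r j)) t ^ k) \<longlonglongrightarrow> char N t ^ k"
      by (intro tendsto_power) (simp add: comp_def)
    moreover have "char ((\<mu> \<circ> r) j) t = char (\<nu> (r j)) t ^ k" for j
      by (simp add: \<nu>(2) iid_char[OF \<nu>(1)])
    ultimately have "(\<lambda>j. char ((\<mu> \<circ> r) j) t) \<longlonglongrightarrow> char N t ^ k" by simp
    with 1 have "char M t = char N t ^ k" by (rule LIMSEQ_unique)
    then show "char M t = char (iid_sum_distr k N) t" by (simp add: iid_char[OF rdN])
  qed
  then have "M = iid_sum_distr k N"
    by (rule Levy_uniqueness[rotated 2]) (use rdM iid_rd[OF rdN] rd_iff in auto)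
  then show "\<exists>\<nu>. real_distribution \<nu> \<and> M = iid_sum_distr k \<nu>" using rdN by blast
qed

lemma wc_int_conv:
  fixes f :: "real \<Rightarrow> real"
  assumes rd: "\<And>n. real_distribution (\<mu> n)" and rdM: "real_distribution M" and wc: "weak_conv_m \<mu> M"
    and cont: "\<And>x. isCont f x" and bd: "\<And>x. \<bar>f x\<bar> \<le> B"
  shows "(\<lambda>n. \<integral>x. f x \<partial>\<mu> n) \<longlonglongrightarrow> (\<integral>x. f x \<partial>M)"
  by (rule weak_conv_imp_integral_bdd_continuous_conv[where B=B])
     (use rd rdM wc cont bd rd_iff in auto)

lemma integrable_x_of_x2:
  assumes rd: "real_distribution \<nu>" and int: "integrable \<nu> (\<lambda>x. x\<^sup>2)"
  shows "integrable \<nu> (\<lambda>x. x)"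
proof -
  interpret prob_space \<nu> using rd by (rule ps_rd)
  have sN: "sets \<nu> = sets borel" using rd by (rule sets_rd)
  show ?thesis
  proof (rule Bochner_Integration.integrable_bound[where f="\<lambda>x. 1 + x\<^sup>2"])
    show "integrable \<nu> (\<lambda>x. 1 + x\<^sup>2)" using int by simp
    show "(\<lambda>x. x) \<in> borel_measurable \<nu>" by (simp add: measurable_cong_sets[OF sN refl])
    show "AE x in \<nu>. norm x \<le> norm (1 + x\<^sup>2)"
    proof (rule AE_I2)
      fix x :: real
      have "\<bar>x\<bar> \<le> 1 + x\<^sup>2"
      proof (cases "\<bar>x\<bar> \<le> 1")
        case False
        then have "\<bar>x\<bar> * 1 \<le> \<bar>x\<bar> * \<bar>x\<bar>" by (intro mult_left_mono) auto
        then show ?thesis by (simp add: power2_eq_square)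
      next
        case True
        have "0 \<le> x\<^sup>2" by simp
        then show ?thesis using True by linarith
      qed
      then show "norm x \<le> norm (1 + x\<^sup>2)" by simp
    qed
  qed
qed

definition clampK :: "real \<Rightarrow> real \<Rightarrow> real" where
  "clampK K x = max (-K) (min K x)"

lemma clampK_cont: "isCont (clampK K) x"
  unfolding clampK_def by (intro continuous_intros)

lemma clampK_bd: "K \<ge> 0 \<Longrightarrow> \<bar>clampK K x\<bar> \<le> K"
  unfolding clampK_def by auto

lemma clampK_err: "K > 0 \<Longrightarrow> \<bar>x - clampK K x\<bar> \<le> x\<^sup>2 / K"
proof -
  assume K: "K > 0"
  show ?thesis
  proof (cases "\<bar>x\<bar> \<le> K")
    case True then show ?thesis using K unfolding clampK_def by (auto simp: max_def min_def)
  next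
    case False
    then have "\<bar>x - clampK K x\<bar> \<le> \<bar>x\<bar>" using K unfolding clampK_def by (auto simp: max_def min_def)
    also have "\<bar>x\<bar> \<le> x\<^sup>2 / K"
    proof -
      have "K * \<bar>x\<bar> \<le> \<bar>x\<bar> * \<bar>x\<bar>" using False by (intro mult_right_mono) auto
      then show ?thesis using K by (simp add: field_simps power2_eq_square)
    qed
    finally show ?thesis .
  qed
qed

lemma mean_clamp_err:
  assumes rd: "real_distribution \<nu>" and int: "integrable \<nu> (\<lambda>x. x\<^sup>2)" and K: "K > 0"
  shows "\<bar>(\<integral>x. x \<partial>\<nu>) - (\<integral>x. clampK K x \<partial>\<nu>)\<bar> \<le> (\<integral>x. x\<^sup>2 \<partial>\<nu>) / K"
proof -
  interpret prob_space \<nu> using rd by (rule ps_rd)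
  have sN: "sets \<nu> = sets borel" using rd by (rule sets_rd)
  have i1: "integrable \<nu> (\<lambda>x. x)" by (rule integrable_x_of_x2[OF rd int])
  have mc: "clampK K \<in> borel_measurable \<nu>"
    unfolding measurable_cong_sets[OF sN refl]
    by (intro borel_measurable_continuous_onI continuous_at_imp_continuous_on ballI clampK_cont)
  have i2: "integrable \<nu> (clampK K)"
    by (rule integrable_const_bound[where B=K]) (use mc clampK_bd K in auto)
  have "\<bar>(\<integral>x. x \<partial>\<nu>) - (\<integral>x. clampK K x \<partial>\<nu>)\<bar> = \<bar>\<integral>x. x - clampK K x \<partial>\<nu>\<bar>"
    using i1 i2 by simp
  also have "\<dots> \<le> (\<integral>x. \<bar>x - clampK K x\<bar> \<partial>\<nu>)"
    by (rule integral_abs_bound)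
  also have "\<dots> \<le> (\<integral>x. x\<^sup>2 / K \<partial>\<nu>)"
    by (rule integral_mono) (use i1 i2 int clampK_err[OF K] in auto)
  also have "\<dots> = (\<integral>x. x\<^sup>2 \<partial>\<nu>) / K" by simp
  finally show ?thesis .
qed

lemma meas_cont: "(\<And>x. isCont f x) \<Longrightarrow> real_distribution \<nu> \<Longrightarrow> (f :: real \<Rightarrow> real) \<in> borel_measurable \<nu>"
  by (simp add: measurable_cong_sets[OF sets_rd refl] borel_measurable_continuous_onI continuous_at_imp_continuous_on)

lemma limit_moments:
  assumes rd: "\<And>n. real_distribution (\<mu> n)" and rdM: "real_distribution M" and wc: "weak_conv_m \<mu> M"
    and int: "\<And>n. integrable (\<mu> n) (\<lambda>x. x\<^sup>2)" and m2: "\<And>n. (\<integral>x. x\<^sup>2 \<partial>\<mu> n) = 1"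
    and m1: "\<And>n. (\<integral>x. x \<partial>\<mu> n) = 0"
  shows "integrable M (\<lambda>x. x\<^sup>2) \<and> (\<integral>x. x\<^sup>2 \<partial>M) \<le> 1 \<and> (\<integral>x. x \<partial>M) = 0"
proof -
  interpret prob_space M using rdM by (rule ps_rd)
  define g where "g = (\<lambda>(j::nat) (x::real). min (x\<^sup>2) (real j))"
  have gc: "isCont (g j) x" for j x unfolding g_def by (intro continuous_intros)
  have gbd: "\<bar>g j x\<bar> \<le> real j" for j x unfolding g_def by auto
  have gint: "integrable \<nu> (g j)" if "real_distribution \<nu>" for \<nu> j
  proof -
    interpret N: prob_space \<nu> using that by (rule ps_rd)
    show ?thesis by (rule N.integrable_const_bound[where B="real j"]) (use gbd meas_cont[OF gc that] in auto)
  qed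
  have gle: "(\<integral>x. g j x \<partial>M) \<le> 1" for j
  proof (rule LIMSEQ_le_const2)
    show "(\<lambda>n. \<integral>x. g j x \<partial>\<mu> n) \<longlonglongrightarrow> (\<integral>x. g j x \<partial>M)"
      by (rule wc_int_conv[OF rd rdM wc gc gbd])
    show "\<exists>N. \<forall>n\<ge>N. (\<integral>x. g j x \<partial>\<mu> n) \<le> 1"
    proof (intro exI allI impI)
      fix n
      have "(\<integral>x. g j x \<partial>\<mu> n) \<le> (\<integral>x. x\<^sup>2 \<partial>\<mu> n)"
        by (rule integral_mono[OF gint[OF rd] int]) (simp add: g_def)
      then show "(\<integral>x. g j x \<partial>\<mu> n) \<le> 1" using m2[of n] by simp
    qed
  qed
  have inc: "incseq (\<lambda>j. \<integral>x. g j x \<partial>M)"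
    by (intro monoI integral_mono gint[OF rdM]) (auto simp: g_def)
  have lim: "(\<lambda>j. \<integral>x. g j x \<partial>M) \<longlonglongrightarrow> (SUP j. \<integral>x. g j x \<partial>M)"
    by (rule LIMSEQ_incseq_SUP[OF _ inc]) (use gle in \<open>auto intro!: bdd_aboveI\<close>)
  have pt: "(\<lambda>j. g j x) \<longlonglongrightarrow> x\<^sup>2" for x
  proof (rule tendsto_eventually)
    show "\<forall>\<^sub>F j in sequentially. g j x = x\<^sup>2"
      unfolding eventually_sequentially
    proof (intro exI allI impI)
      fix j assume "nat \<lceil>x\<^sup>2\<rceil> \<le> j"
      then have "x\<^sup>2 \<le> real j" by linarith
      then show "g j x = x\<^sup>2" by (simp add: g_def)
    qed
  qed
  have mx2: "(\<lambda>x. x\<^sup>2) \<in> borel_measurable M" by (rule meas_cont[OF _ rdM]) simp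
  have monog: "AE x in M. mono (\<lambda>n. g n x)" by (auto simp: g_def mono_def)
  have I: "integrable M (\<lambda>x. x\<^sup>2)"
    by (rule integrable_monotone_convergence[OF gint[OF rdM] monog _ lim mx2]) (use pt in simp)
  have Ieq: "(\<integral>x. x\<^sup>2 \<partial>M) = (SUP j. \<integral>x. g j x \<partial>M)"
    by (rule integral_monotone_convergence[OF gint[OF rdM] monog _ lim mx2]) (use pt in simp)
  have I1: "(\<integral>x. x\<^sup>2 \<partial>M) \<le> 1" unfolding Ieq by (rule cSUP_least) (use gle in auto)
  have mean: "(\<integral>x. x \<partial>M) = 0"
  proof -
    have bnd: "\<bar>\<integral>x. x \<partial>M\<bar> \<le> 2 / K" if K: "K > 0" for K
    proof -
      have a: "\<bar>\<integral>x. clampK K x \<partial>M\<bar> \<le> 1 / K"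
      proof (rule LIMSEQ_le_const2)
        show "(\<lambda>n. \<bar>\<integral>x. clampK K x \<partial>\<mu> n\<bar>) \<longlonglongrightarrow> \<bar>\<integral>x. clampK K x \<partial>M\<bar>"
          by (intro tendsto_rabs wc_int_conv[OF rd rdM wc clampK_cont clampK_bd]) (use K in simp)
        show "\<exists>N. \<forall>n\<ge>N. \<bar>\<integral>x. clampK K x \<partial>\<mu> n\<bar> \<le> 1 / K"
          using mean_clamp_err[OF rd int K] m1 m2 by simp
      qed
      have b: "\<bar>(\<integral>x. x \<partial>M) - (\<integral>x. clampK K x \<partial>M)\<bar> \<le> (\<integral>x. x\<^sup>2 \<partial>M) / K"
        by (rule mean_clamp_err[OF rdM I K])
      have "(\<integral>x. x\<^sup>2 \<partial>M) / K \<le> 1 / K" using I1 K by (intro divide_right_mono) auto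
      then show ?thesis using a b by simp
    qed
    show ?thesis
    proof (rule ccontr)
      assume ne: "(\<integral>x. x \<partial>M) \<noteq> 0"
      define a where "a = \<bar>\<integral>x. x \<partial>M\<bar>"
      have a: "a > 0" using ne by (simp add: a_def)
      have "a \<le> 2 / (4 / a)" using bnd[of "4 / a"] a by (simp add: a_def)
      also have "\<dots> = a / 2" using a by simp
      finally show False using a by simp
    qed
  qed
  show ?thesis using I I1 mean by blast
qed

lemma open_limit:
  assumes rd: "\<And>n. real_distribution (\<mu> n)" and rdM: "real_distribution M" and wc: "weak_conv_m \<mu> M"
    and L: "(\<lambda>n. measure (\<mu> n) {x. \<bar>x\<bar> < 1}) \<longlonglongrightarrow> L"
  shows "measure M {x. \<bar>x\<bar> < 1} \<le> L"
proof -
  define U where "U = {x::real. \<bar>x\<bar> < 1}"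
  define h where "h = (\<lambda>(j::nat) (x::real). min 1 (real j * max 0 (1 - \<bar>x\<bar>)))"
  have hc: "isCont (h j) x" for j x unfolding h_def by (intro continuous_intros)
  have hbd: "\<bar>h j x\<bar> \<le> 1" for j x unfolding h_def by auto
  have hle: "h j x \<le> indicator U x" for j x unfolding h_def U_def by (auto simp: indicator_def)
  have Us: "U \<in> sets \<nu>" if "real_distribution \<nu>" for \<nu>
    unfolding sets_rd[OF that] U_def by measurable
  have hint: "integrable \<nu> (h j)" if "real_distribution \<nu>" for \<nu> j
  proof -
    interpret N: prob_space \<nu> using that by (rule ps_rd)
    show ?thesis by (rule N.integrable_const_bound[where B=1]) (use hbd meas_cont[OF hc that] in auto)
  qed
  have Uint: "integrable \<nu> (indicator U :: real \<Rightarrow> real)" if "real_distribution \<nu>" for \<nu>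
  proof -
    interpret N: prob_space \<nu> using that by (rule ps_rd)
    show ?thesis using Us[OF that] by (intro integrable_real_indicator) (auto simp: less_top[symmetric])
  qed
  have Umeas: "measure \<nu> U = (\<integral>x. indicator U x \<partial>\<nu>)" if "real_distribution \<nu>" for \<nu>
  proof -
    interpret N: prob_space \<nu> using that by (rule ps_rd)
    show ?thesis using Us[OF that] by simp
  qed
  have hM: "(\<integral>x. h j x \<partial>M) \<le> L" for j
  proof (rule LIMSEQ_le[OF wc_int_conv[OF rd rdM wc hc hbd] L])
    show "\<exists>N. \<forall>n\<ge>N. (\<integral>x. h j x \<partial>\<mu> n) \<le> measure (\<mu> n) {x. \<bar>x\<bar> < 1}"
    proof (intro exI allI impI)
      fix n
      show "(\<integral>x. h j x \<partial>\<mu> n) \<le> measure (\<mu> n) {x. \<bar>x\<bar> < 1}"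
        unfolding U_def[symmetric] Umeas[OF rd]
        by (rule integral_mono[OF hint[OF rd] Uint[OF rd] hle])
    qed
  qed
  have conv: "(\<lambda>j. \<integral>x. h j x \<partial>M) \<longlonglongrightarrow> (\<integral>x. indicator U x \<partial>M)"
  proof (rule integral_dominated_convergence[where w="\<lambda>_. 1"])
    interpret prob_space M using rdM by (rule ps_rd)
    show "indicator U \<in> borel_measurable M" using Us[OF rdM] by simp
    show "h j \<in> borel_measurable M" for j by (rule meas_cont[OF hc rdM])
    show "integrable M (\<lambda>_. 1::real)" by simp
    show "AE x in M. norm (h j x) \<le> 1" for j using hbd by simp
    show "AE x in M. (\<lambda>j. h j x) \<longlonglongrightarrow> indicator U x"
    proof (rule AE_I2)
      fix x :: real
      show "(\<lambda>j. h j x) \<longlonglongrightarrow> indicator U x"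
      proof (cases "\<bar>x\<bar> < 1")
        case True
        then have pos: "1 - \<bar>x\<bar> > 0" by simp
        obtain N :: nat where N: "real N > 1 / (1 - \<bar>x\<bar>)" using reals_Archimedean2 by blast
        show ?thesis
        proof (rule tendsto_eventually, unfold eventually_sequentially, intro exI allI impI)
          fix j assume "N \<le> j"
          then have "real j > 1 / (1 - \<bar>x\<bar>)" using N by linarith
          then have "real j * (1 - \<bar>x\<bar>) \<ge> 1" using pos by (simp add: field_simps)
          then show "h j x = indicator U x" using True pos by (simp add: h_def U_def max_def)
        qed
      next
        case False
        then have "h j x = 0" for j by (simp add: h_def)
        then show ?thesis using False by (simp add: U_def)
      qed
    qed
  qed
  have "measure M U \<le> L"
    unfolding Umeas[OF rdM] by (rule LIMSEQ_le_const2[OF conv]) (use hM in auto)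
  then show ?thesis by (simp add: U_def)
qed

lemma spc_rd: "real_distribution \<nu> \<Longrightarrow> space \<nu> = UNIV"
  using sets_eq_imp_space_eq[OF sets_rd] by simp

lemma measure_PiM_PiE:
  fixes k :: nat
  assumes rd: "real_distribution \<nu>" and A: "\<And>i. A i \<in> sets borel"
  shows "measure (PiM {..<k} (\<lambda>_. \<nu>)) (PiE {..<k} A) = (\<Prod>i<k. measure \<nu> (A i))"
proof -
  interpret prob_space \<nu> using rd by (rule ps_rd)
  interpret P: product_sigma_finite "\<lambda>_. \<nu>"
    by (simp add: product_sigma_finite_def sigma_finite_measure_axioms)
  have sM: "sets \<nu> = sets borel" using rd by (rule sets_rd)
  have "emeasure (PiM {..<k} (\<lambda>_. \<nu>)) (PiE {..<k} A) = (\<Prod>i<k. emeasure \<nu> (A i))"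
    using A sM by (intro P.emeasure_PiM) auto
  also have "\<dots> = ennreal (\<Prod>i<k. measure \<nu> (A i))"
    by (simp add: emeasure_eq_measure prod_ennreal)
  finally show ?thesis by (simp add: measure_def prod_nonneg)
qed

lemma iid_measure:
  assumes rd: "real_distribution \<nu>" and B: "B \<in> sets borel"
  shows "measure (iid_sum_distr k \<nu>) B =
    measure (PiM {..<k} (\<lambda>_. \<nu>)) ((\<lambda>x. \<Sum>i<k. x i) -` B \<inter> space (PiM {..<k} (\<lambda>_. \<nu>)))"
proof -
  have sN: "sets \<nu> = sets borel" using rd by (rule sets_rd)
  have sP: "sets (PiM {..<k} (\<lambda>_. \<nu>)) = sets (PiM {..<k} (\<lambda>_. borel))"
    using sN by (intro sets_PiM_cong) simp_all
  have m: "(\<lambda>x. \<Sum>i<k. x i :: real) \<in> measurable (PiM {..<k} (\<lambda>_. \<nu>)) borel"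
    by (subst measurable_cong_sets[OF sP refl]) measurable
  show ?thesis unfolding iid_sum_distr_def by (rule measure_distr[OF m]) (use B in simp)
qed

lemma AE_measure0:
  assumes rd: "real_distribution \<mu>" and A: "A \<in> sets borel" and ae: "AE x in \<mu>. x \<notin> A"
  shows "measure \<mu> A = 0"
proof -
  have sN: "sets \<mu> = sets borel" using rd by (rule sets_rd)
  have "emeasure \<mu> A = 0"
    using ae by (subst (asm) AE_iff_measurable[of A]) (use A sN spc_rd[OF rd] in auto)
  then show ?thesis by (simp add: measure_def)
qed

lemma sq_half: "(a::real) \<ge> 0 \<Longrightarrow> a\<^sup>2 \<ge> 1/2 \<Longrightarrow> a > 1/2"
proof (rule ccontr)
  assume a: "a \<ge> 0" "a\<^sup>2 \<ge> 1/2" "\<not> a > 1/2"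
  then have "a * a \<le> (1/2) * (1/2)" by (intro mult_mono) auto
  then show False using a by (simp add: power2_eq_square)
qed

lemma two_point_not_ID:
  assumes rd: "real_distribution \<mu>" and idv: "infinitely_divisible \<mu>" and s: "s > 0"
    and ae: "AE x in \<mu>. x = m + s \<or> x = m - s"
    and p: "measure \<mu> {m + s} = 1/2" and q: "measure \<mu> {m - s} = 1/2"
  shows False
proof -
  obtain \<nu> where \<nu>: "real_distribution \<nu>" "\<mu> = iid_sum_distr 2 \<nu>"
    using idv[unfolded infinitely_divisible_def, rule_format, of 2] by auto
  interpret N: prob_space \<nu> using \<nu>(1) by (rule ps_rd)
  define P where "P = PiM {..<2::nat} (\<lambda>_. \<nu>)"
  interpret P: prob_space P unfolding P_def by (intro prob_space_PiM) (rule N.prob_space_axioms)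
  have sN: "sets \<nu> = sets borel" using \<nu>(1) by (rule sets_rd)
  have spP: "space P = PiE {..<2::nat} (\<lambda>_. UNIV)" unfolding P_def by (simp add: space_PiM spc_rd[OF \<nu>(1)])
  have sP: "sets P = sets (PiM {..<2::nat} (\<lambda>_. borel))"
    unfolding P_def using sN by (intro sets_PiM_cong) simp_all
  have sum2: "(\<Sum>i<2. x i) = x 0 + x 1" for x :: "nat \<Rightarrow> real"
    by (simp add: numeral_2_eq_2)
  define c where "c = (m + s) / 2"
  define d where "d = (m - s) / 2"
  have cd: "d < c" using s by (simp add: c_def d_def)
  have z1: "measure \<mu> {m + s<..} = 0"
    by (rule AE_measure0[OF rd]) (use ae s in auto)
  have z2: "measure \<mu> {..<m - s} = 0"
    by (rule AE_measure0[OF rd]) (use ae s in auto)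
  have iidm: "measure \<mu> B = measure P ((\<lambda>x. x 0 + x 1) -` B \<inter> space P)" if "B \<in> sets borel" for B
    unfolding \<nu>(2) iid_measure[OF \<nu>(1) that] P_def[symmetric] by (simp only: sum2)
  have mS: "(\<lambda>x. x 0 + x 1 :: real) \<in> borel_measurable P"
    by (subst measurable_cong_sets[OF sP refl]) measurable
  have evP: "(\<lambda>x. x 0 + x 1) -` B \<inter> space P \<in> sets P" if "B \<in> sets borel" for B
    using measurable_sets[OF mS] that by simp
  have pie: "measure P (PiE {..<2::nat} A) = measure \<nu> (A 0) * measure \<nu> (A 1)" if "\<And>i. A i \<in> sets borel" for A
    unfolding P_def measure_PiM_PiE[OF \<nu>(1) that] by (simp add: numeral_2_eq_2)
  have PiE2: "x \<in> PiE {..<2::nat} A \<longleftrightarrow> x \<in> space P \<and> x 0 \<in> A 0 \<and> x 1 \<in> A 1" for x A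
    unfolding spP by (auto simp: PiE_iff numeral_2_eq_2 less_Suc_eq)
  have a1: "measure \<nu> {c<..} = 0"
  proof -
    have "measure \<nu> {c<..} * measure \<nu> {c<..} = measure P (PiE {..<2::nat} (\<lambda>_. {c<..}))"
      by (subst pie) auto
    also have "\<dots> \<le> measure P ((\<lambda>x. x 0 + x 1) -` {m + s<..} \<inter> space P)"
    proof (rule P.finite_measure_mono[OF _ evP])
      show "PiE {..<2::nat} (\<lambda>_. {c<..}) \<subseteq> (\<lambda>x. x 0 + x 1) -` {m + s<..} \<inter> space P"
      proof
        fix x assume "x \<in> PiE {..<2::nat} (\<lambda>_. {c<..})"
        then have "x \<in> space P" "c < x 0 \<and> c < x 1" unfolding PiE2 by auto
        then show "x \<in> (\<lambda>x. x 0 + x 1) -` {m + s<..} \<inter> space P" by (simp add: c_def)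
      qed
    qed simp
    also have "\<dots> = 0" using z1 iidm[of "{m + s<..}"] by simp
    finally show ?thesis using measure_nonneg[of \<nu> "{c<..}"] by (simp add: mult_le_0_iff)
  qed
  have a2: "measure \<nu> {..<d} = 0"
  proof -
    have "measure \<nu> {..<d} * measure \<nu> {..<d} = measure P (PiE {..<2::nat} (\<lambda>_. {..<d}))"
      by (subst pie) auto
    also have "\<dots> \<le> measure P ((\<lambda>x. x 0 + x 1) -` {..<m - s} \<inter> space P)"
    proof (rule P.finite_measure_mono[OF _ evP])
      show "PiE {..<2::nat} (\<lambda>_. {..<d}) \<subseteq> (\<lambda>x. x 0 + x 1) -` {..<m - s} \<inter> space P"
      proof
        fix x assume "x \<in> PiE {..<2::nat} (\<lambda>_. {..<d})"
        then have "x \<in> space P" "x 0 < d \<and> x 1 < d" unfolding PiE2 by auto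
        then show "x \<in> (\<lambda>x. x 0 + x 1) -` {..<m - s} \<inter> space P" by (simp add: d_def)
      qed
    qed simp
    also have "\<dots> = 0" using z2 iidm[of "{..<m - s}"] by simp
    finally show ?thesis using measure_nonneg[of \<nu> "{..<d}"] by (simp add: mult_le_0_iff)
  qed
  have pU: "measure \<nu> UNIV = 1" using N.prob_space spc_rd[OF \<nu>(1)] by simp
  define L0 where "L0 = (\<lambda>A::real set. \<lambda>i::nat. if i = 0 then A else UNIV)"
  define L1 where "L1 = (\<lambda>A::real set. \<lambda>i::nat. if i = 0 then UNIV else A)"
  have L0m: "measure P (PiE {..<2::nat} (L0 A)) = measure \<nu> A" if "A \<in> sets borel" for A
    using that by (subst pie) (auto simp: L0_def pU)
  have L1m: "measure P (PiE {..<2::nat} (L1 A)) = measure \<nu> A" if "A \<in> sets borel" for A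
    using that by (subst pie) (auto simp: L1_def pU)
  have Pev: "PiE {..<2::nat} A \<in> sets P" if "\<And>i. A i \<in> sets borel" for A
    unfolding P_def using that sN by (intro sets_PiM_I_finite) auto
  have un3: "measure P (X \<union> Y \<union> Z) \<le> measure P X + measure P Y + measure P Z"
    if "X \<in> sets P" "Y \<in> sets P" "Z \<in> sets P" for X Y Z
  proof -
    have "measure P (X \<union> Y \<union> Z) \<le> measure P (X \<union> Y) + measure P Z"
      using that by (intro measure_subadditive) (auto simp: P.emeasure_eq_measure)
    also have "measure P (X \<union> Y) \<le> measure P X + measure P Y"
      using that by (intro measure_subadditive) (auto simp: P.emeasure_eq_measure)
    finally show ?thesis by simp
  qed
  have b1: "1/2 \<le> measure \<nu> {c} * measure \<nu> {c}"
  proof -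
    have "1/2 = measure P ((\<lambda>x. x 0 + x 1) -` {m + s} \<inter> space P)" using p iidm[of "{m + s}"] by simp
    also have "\<dots> \<le> measure P (PiE {..<2::nat} (\<lambda>_. {c}) \<union> PiE {..<2::nat} (L0 {c<..}) \<union> PiE {..<2::nat} (L1 {c<..}))"
    proof (rule P.finite_measure_mono)
      show "(\<lambda>x. x 0 + x 1) -` {m + s} \<inter> space P \<subseteq> PiE {..<2::nat} (\<lambda>_. {c}) \<union> PiE {..<2::nat} (L0 {c<..}) \<union> PiE {..<2::nat} (L1 {c<..})"
      proof
        fix x assume x: "x \<in> (\<lambda>x. x 0 + x 1) -` {m + s} \<inter> space P"
        then have sp: "x \<in> space P" and eq: "x 0 + x 1 = m + s" by auto
        show "x \<in> PiE {..<2::nat} (\<lambda>_. {c}) \<union> PiE {..<2::nat} (L0 {c<..}) \<union> PiE {..<2::nat} (L1 {c<..})"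
        proof (cases "c < x 0")
          case True then show ?thesis using sp by (simp add: PiE2 L0_def)
        next
          case f1: False
          show ?thesis
          proof (cases "c < x 1")
            case True then show ?thesis using sp by (simp add: PiE2 L1_def)
          next
            case False
            then have "x 0 = c \<and> x 1 = c" using f1 eq by (simp add: c_def)
            then have "x \<in> PiE {..<2::nat} (\<lambda>_. {c})" unfolding PiE2 using sp by simp
            then show ?thesis by blast
          qed
        qed
      qed
      show "PiE {..<2::nat} (\<lambda>_. {c}) \<union> PiE {..<2::nat} (L0 {c<..}) \<union> PiE {..<2::nat} (L1 {c<..}) \<in> sets P"
        by (intro sets.Un Pev) (auto simp: L0_def L1_def)
    qed
    also have "\<dots> \<le> measure P (PiE {..<2::nat} (\<lambda>_. {c})) + measure P (PiE {..<2::nat} (L0 {c<..})) + measure P (PiE {..<2::nat} (L1 {c<..}))"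
      by (intro un3 Pev) (auto simp: L0_def L1_def)
    also have "\<dots> = measure \<nu> {c} * measure \<nu> {c}"
      using a1 pie[of "\<lambda>_. {c}"] L0m[of "{c<..}"] L1m[of "{c<..}"] by simp
    finally show ?thesis .
  qed
  have b2: "1/2 \<le> measure \<nu> {d} * measure \<nu> {d}"
  proof -
    have "1/2 = measure P ((\<lambda>x. x 0 + x 1) -` {m - s} \<inter> space P)" using q iidm[of "{m - s}"] by simp
    also have "\<dots> \<le> measure P (PiE {..<2::nat} (\<lambda>_. {d}) \<union> PiE {..<2::nat} (L0 {..<d}) \<union> PiE {..<2::nat} (L1 {..<d}))"
    proof (rule P.finite_measure_mono)
      show "(\<lambda>x. x 0 + x 1) -` {m - s} \<inter> space P \<subseteq> PiE {..<2::nat} (\<lambda>_. {d}) \<union> PiE {..<2::nat} (L0 {..<d}) \<union> PiE {..<2::nat} (L1 {..<d})"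
      proof
        fix x assume x: "x \<in> (\<lambda>x. x 0 + x 1) -` {m - s} \<inter> space P"
        then have sp: "x \<in> space P" and eq: "x 0 + x 1 = m - s" by auto
        show "x \<in> PiE {..<2::nat} (\<lambda>_. {d}) \<union> PiE {..<2::nat} (L0 {..<d}) \<union> PiE {..<2::nat} (L1 {..<d})"
        proof (cases "x 0 < d")
          case True then show ?thesis using sp by (simp add: PiE2 L0_def)
        next
          case f1: False
          show ?thesis
          proof (cases "x 1 < d")
            case True then show ?thesis using sp by (simp add: PiE2 L1_def)
          next
            case False
            then have "x 0 = d \<and> x 1 = d" using f1 eq by (simp add: d_def)
            then have "x \<in> PiE {..<2::nat} (\<lambda>_. {d})" unfolding PiE2 using sp by simp
            then show ?thesis by blast
          qed
        qed
      qed
      show "PiE {..<2::nat} (\<lambda>_. {d}) \<union> PiE {..<2::nat} (L0 {..<d}) \<union> PiE {..<2::nat} (L1 {..<d}) \<in> sets P"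
        by (intro sets.Un Pev) (auto simp: L0_def L1_def)
    qed
    also have "\<dots> \<le> measure P (PiE {..<2::nat} (\<lambda>_. {d})) + measure P (PiE {..<2::nat} (L0 {..<d})) + measure P (PiE {..<2::nat} (L1 {..<d}))"
      by (intro un3 Pev) (auto simp: L0_def L1_def)
    also have "\<dots> = measure \<nu> {d} * measure \<nu> {d}"
      using a2 pie[of "\<lambda>_. {d}"] L0m[of "{..<d}"] L1m[of "{..<d}"] by simp
    finally show ?thesis .
  qed
  have "measure \<nu> {c} > 1/2" using b1 by (intro sq_half) (auto simp: power2_eq_square)
  moreover have "measure \<nu> {d} > 1/2" using b2 by (intro sq_half) (auto simp: power2_eq_square)
  moreover have "measure \<nu> ({c} \<union> {d}) = measure \<nu> {c} + measure \<nu> {d}"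
    using cd by (intro N.finite_measure_Union) (auto simp: sN)
  moreover have "measure \<nu> ({c} \<union> {d}) \<le> 1" by (rule N.prob_le_1)
  ultimately show False by linarith
qed

lemma integrable_sq_shift:
  assumes rd: "real_distribution \<mu>" and int: "integrable \<mu> (\<lambda>x. x\<^sup>2)"
  shows "integrable \<mu> (\<lambda>x. (x - m)\<^sup>2)"
proof -
  interpret prob_space \<mu> using rd by (rule ps_rd)
  have i1: "integrable \<mu> (\<lambda>x. x)" by (rule integrable_x_of_x2[OF rd int])
  have "integrable \<mu> (\<lambda>x. x\<^sup>2 + (-2 * m) * x + m\<^sup>2)"
    using int i1 by (intro Bochner_Integration.integrable_add integrable_mult_right) auto
  moreover have "(\<lambda>x. x\<^sup>2 + (-2 * m) * x + m\<^sup>2) = (\<lambda>x. (x - m)\<^sup>2)"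
    by (auto simp: power2_eq_square algebra_simps)
  ultimately show ?thesis by simp
qed

lemma var_nonneg: "var \<mu> \<ge> 0"
  unfolding var_def by (rule integral_nonneg_AE) simp

lemma pos_f:
  assumes mem: "\<mu> \<in> ID0_class"
  shows "measure \<mu> {x. \<bar>x - mean \<mu>\<bar> < sqrt (var \<mu>)} > 0"
proof (rule ccontr)
  have rd: "real_distribution \<mu>" and idv: "infinitely_divisible \<mu>" and int: "integrable \<mu> (\<lambda>x. x\<^sup>2)"
    and vpos: "var \<mu> > 0"
    using mem by (auto simp: ID0_class_def ID_class_def)
  interpret prob_space \<mu> using rd by (rule ps_rd)
  have sN: "sets \<mu> = sets borel" using rd by (rule sets_rd)
  have spN: "space \<mu> = UNIV" using rd by (rule spc_rd)
  define m where "m = mean \<mu>"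
  define s where "s = sqrt (var \<mu>)"
  have s: "s > 0" using vpos by (simp add: s_def)
  have s2: "s\<^sup>2 = var \<mu>" using vpos by (simp add: s_def)
  define U where "U = {x. \<bar>x - m\<bar> < s}"
  have Us: "U \<in> sets \<mu>" unfolding sN U_def by measurable
  assume "\<not> measure \<mu> {x. \<bar>x - mean \<mu>\<bar> < sqrt (var \<mu>)} > 0"
  then have "\<not> measure \<mu> U > 0" by (simp add: U_def m_def s_def)
  then have "measure \<mu> U = 0" using measure_nonneg[of \<mu> U] by linarith
  then have "U \<in> null_sets \<mu>" using Us by (simp add: emeasure_eq_measure null_sets_def)
  then have aeU: "AE x in \<mu>. s \<le> \<bar>x - m\<bar>"
    by (rule AE_I') (auto simp: U_def spN)
  have iq: "integrable \<mu> (\<lambda>x. (x - m)\<^sup>2 - s\<^sup>2)"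
    using integrable_sq_shift[OF rd int, of m] by simp
  have "(\<integral>x. (x - m)\<^sup>2 - s\<^sup>2 \<partial>\<mu>) = var \<mu> - s\<^sup>2"
    using integrable_sq_shift[OF rd int, of m] by (simp add: var_def m_def prob_space)
  also have "\<dots> = 0" using s2 by simp
  finally have "(\<integral>x. (x - m)\<^sup>2 - s\<^sup>2 \<partial>\<mu>) = 0" .
  moreover have "AE x in \<mu>. 0 \<le> (x - m)\<^sup>2 - s\<^sup>2"
    using aeU
  proof (rule AE_mp, intro AE_I2 impI)
    fix x assume "s \<le> \<bar>x - m\<bar>"
    then have "s\<^sup>2 \<le> \<bar>x - m\<bar>\<^sup>2" using s by (intro power_mono) auto
    then show "0 \<le> (x - m)\<^sup>2 - s\<^sup>2" by simp
  qed
  ultimately have "AE x in \<mu>. (x - m)\<^sup>2 - s\<^sup>2 = 0"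
    using integral_nonneg_eq_0_iff_AE[OF iq] by blast
  then have ae: "AE x in \<mu>. x = m + s \<or> x = m - s"
  proof (rule AE_mp, intro AE_I2 impI)
    fix x assume "(x - m)\<^sup>2 - s\<^sup>2 = 0"
    then have "\<bar>x - m\<bar> = \<bar>s\<bar>" using power2_eq_iff[of "x - m" s] by (auto)
    then show "x = m + s \<or> x = m - s" using s by (auto simp: abs_if split: if_splits)
  qed
  define p where "p = measure \<mu> {m + s}"
  define q where "q = measure \<mu> {m - s}"
  have pq: "p + q = 1"
  proof -
    have "measure \<mu> (UNIV - {m + s, m - s}) = 0"
      by (rule AE_measure0[OF rd]) (use ae in auto)
    then have "measure \<mu> {m + s, m - s} = 1"
      using prob_compl[of "{m + s, m - s}"] by (simp add: spN sN)
    moreover have "measure \<mu> ({m + s} \<union> {m - s}) = p + q"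
      unfolding p_def q_def using s by (intro finite_measure_Union) (simp_all add: sN)
    moreover have "{m + s, m - s} = {m + s} \<union> {m - s}" by auto
    ultimately show ?thesis by simp
  qed
  have "m = (\<integral>x. x \<partial>\<mu>)" by (simp add: m_def mean_def)
  also have "\<dots> = (\<integral>x. m + s * (indicator {m + s} x - indicator {m - s} x) \<partial>\<mu>)"
  proof (rule integral_cong_AE)
    show "(\<lambda>x. x) \<in> borel_measurable \<mu>" by (simp add: measurable_cong_sets[OF sN refl])
    show "(\<lambda>x. m + s * (indicator {m + s} x - indicator {m - s} x)) \<in> borel_measurable \<mu>"
      by (simp add: measurable_cong_sets[OF sN refl])
    show "AE x in \<mu>. x = m + s * (indicator {m + s} x - indicator {m - s} x)"
      using ae
    proof (rule AE_mp, intro AE_I2 impI)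
      fix x assume "x = m + s \<or> x = m - s"
      then show "x = m + s * (indicator {m + s} x - indicator {m - s} x)" using s by auto
    qed
  qed
  also have "\<dots> = m + s * (p - q)"
  proof -
    have ip: "integrable \<mu> (indicator {m + s} :: real \<Rightarrow> real)"
      by (intro integrable_real_indicator) (auto simp: sN less_top[symmetric])
    have iq: "integrable \<mu> (indicator {m - s} :: real \<Rightarrow> real)"
      by (intro integrable_real_indicator) (auto simp: sN less_top[symmetric])
    show ?thesis using ip iq by (simp add: prob_space p_def q_def sN)
  qed
  finally have "s * (p - q) = 0" by simp
  then have "p = q" using s by simp
  then have "p = 1/2" "q = 1/2" using pq by auto
  then show False
    using two_point_not_ID[OF rd idv s ae] by (simp add: p_def q_def)
qed

lemma normalize:
  assumes mem: "\<mu> \<in> ID0_class"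
  defines "\<nu> \<equiv> distr \<mu> borel (\<lambda>x. (1 / sqrt (var \<mu>)) * x + (- mean \<mu> / sqrt (var \<mu>)))"
  shows "real_distribution \<nu>" "infinitely_divisible \<nu>" "integrable \<nu> (\<lambda>x. x\<^sup>2)"
    "(\<integral>x. x\<^sup>2 \<partial>\<nu>) = 1" "(\<integral>x. x \<partial>\<nu>) = 0"
    "measure \<nu> {x. \<bar>x\<bar> < 1} = measure \<mu> {x. \<bar>x - mean \<mu>\<bar> < sqrt (var \<mu>)}"
proof -
  have rd: "real_distribution \<mu>" and idv: "infinitely_divisible \<mu>" and int: "integrable \<mu> (\<lambda>x. x\<^sup>2)"
    and vpos: "var \<mu> > 0"
    using mem by (auto simp: ID0_class_def ID_class_def)
  interpret prob_space \<mu> using rd by (rule ps_rd)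
  have sN: "sets \<mu> = sets borel" using rd by (rule sets_rd)
  have spN: "space \<mu> = UNIV" using rd by (rule spc_rd)
  define s where "s = sqrt (var \<mu>)"
  define m where "m = mean \<mu>"
  have s: "s > 0" using vpos by (simp add: s_def)
  have s2: "s\<^sup>2 = var \<mu>" using vpos by (simp add: s_def)
  define T where "T = (\<lambda>x. (1 / s) * x + (- m / s))"
  have Tx: "T x = (x - m) / s" for x unfolding T_def using s by (simp add: field_simps)
  have nu: "\<nu> = distr \<mu> borel T" unfolding \<nu>_def T_def s_def m_def ..
  have Tm: "T \<in> measurable \<mu> borel" unfolding measurable_cong_sets[OF sN refl] T_def by measurable
  show "real_distribution \<nu>" unfolding \<nu>_def by (rule rd_affine[OF rd])
  show "infinitely_divisible \<nu>" unfolding \<nu>_def by (rule ID_affine[OF rd idv])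
  have i1: "integrable \<mu> (\<lambda>x. x)" by (rule integrable_x_of_x2[OF rd int])
  have isq: "integrable \<mu> (\<lambda>x. (x - m)\<^sup>2)" by (rule integrable_sq_shift[OF rd int])
  have sqT: "(T x)\<^sup>2 = (x - m)\<^sup>2 / s\<^sup>2" for x unfolding Tx by (simp add: power_divide)
  have iT2: "integrable \<mu> (\<lambda>x. (T x)\<^sup>2)" unfolding sqT using isq by simp
  show "integrable \<nu> (\<lambda>x. x\<^sup>2)" unfolding nu using iT2 by (subst integrable_distr_eq[OF Tm]) auto
  have "(\<integral>x. x\<^sup>2 \<partial>\<nu>) = (\<integral>x. (T x)\<^sup>2 \<partial>\<mu>)" unfolding nu by (rule integral_distr[OF Tm]) simp
  also have "\<dots> = (\<integral>x. (x - m)\<^sup>2 \<partial>\<mu>) / s\<^sup>2" unfolding sqT by simp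
  also have "\<dots> = 1" using s2 vpos by (simp add: var_def m_def)
  finally show "(\<integral>x. x\<^sup>2 \<partial>\<nu>) = 1" .
  have "(\<integral>x. x \<partial>\<nu>) = (\<integral>x. T x \<partial>\<mu>)" unfolding nu by (rule integral_distr[OF Tm]) simp
  also have "\<dots> = (\<integral>x. (1 / s) * x \<partial>\<mu>) + (\<integral>x. (- m / s) \<partial>\<mu>)"
    unfolding T_def by (rule Bochner_Integration.integral_add) (use i1 in simp_all)
  also have "\<dots> = (1 / s) * (\<integral>x. x \<partial>\<mu>) + (- m / s)"
    by (simp only: integral_mult_right_zero lebesgue_integral_const prob_space) simp
  also have "\<dots> = 0" using s by (simp add: m_def mean_def)
  finally show "(\<integral>x. x \<partial>\<nu>) = 0" .
  have "measure \<nu> {x. \<bar>x\<bar> < 1} = measure \<mu> (T -` {x. \<bar>x\<bar> < 1} \<inter> space \<mu>)"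
    unfolding nu by (rule measure_distr[OF Tm]) simp
  also have "T -` {x. \<bar>x\<bar> < 1} \<inter> space \<mu> = {x. \<bar>x - m\<bar> < s}"
  proof -
    have e: "\<bar>T x\<bar> < 1 \<longleftrightarrow> \<bar>x - m\<bar> < s" for x
    proof -
      have "\<bar>T x\<bar> = \<bar>x - m\<bar> / s" unfolding Tx using s by (simp add: abs_divide)
      then show ?thesis using s by (simp add: divide_less_eq_1_pos)
    qed
    show ?thesis unfolding spN using e by blast
  qed
  finally show "measure \<nu> {x. \<bar>x\<bar> < 1} = measure \<mu> {x. \<bar>x - mean \<mu>\<bar> < sqrt (var \<mu>)}"
    by (simp add: m_def s_def)
qed

abbreviation "G0 \<equiv> std_normal_distribution"

lemma G0_rd: "real_distribution G0"
  using real_dist_normal_dist rd_iff by blast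

lemma G0_int2: "integrable G0 (\<lambda>x. x\<^sup>2)"
  by (rule integrable_std_normal_distribution_moment)

lemma G0_mean: "mean G0 = 0"
  using integral_std_normal_distribution_moment_odd[of 1] by (simp add: mean_def)

lemma G0_var: "var G0 = 1"
  using std_normal_distribution_even_moments(1)[of 1] by (simp add: var_def G0_mean)

lemma G0_ID: "infinitely_divisible G0"
  unfolding infinitely_divisible_def
proof (intro allI impI)
  fix n :: nat assume n: "n \<ge> 1"
  define \<nu> where "\<nu> = distr G0 borel (\<lambda>x. (1 / sqrt n) * x + 0)"
  have r: "real_distribution \<nu>" unfolding \<nu>_def by (rule rd_affine[OF G0_rd])
  have "G0 = iid_sum_distr n \<nu>"
  proof (rule Levy_uniqueness)
    show "Distribution_Functions.real_distribution G0" by (rule real_dist_normal_dist)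
    show "Distribution_Functions.real_distribution (iid_sum_distr n \<nu>)"
      using iid_rd[OF r] rd_iff by blast
    show "char G0 = char (iid_sum_distr n \<nu>)"
    proof
      fix t
      have np: "real n > 0" using n by simp
      have "char (iid_sum_distr n \<nu>) t = char \<nu> t ^ n" by (rule iid_char[OF r])
      also have "\<dots> = complex_of_real (exp (- ((1 / sqrt n * t)\<^sup>2) / 2)) ^ n"
        unfolding \<nu>_def char_affine[OF G0_rd] char_std_normal_distribution by simp
      also have "\<dots> = complex_of_real (exp (- ((1 / sqrt n * t)\<^sup>2) / 2) ^ n)"
        by (simp only: of_real_power)
      also have "exp (- ((1 / sqrt n * t)\<^sup>2) / 2) ^ n = exp (real n * (- ((1 / sqrt n * t)\<^sup>2) / 2))"
        by (simp only: exp_of_nat_mult)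
      also have "real n * (- ((1 / sqrt n * t)\<^sup>2) / 2) = - (t\<^sup>2) / 2"
        using np by (simp add: power_mult_distrib power_divide)
      finally show "char G0 t = char (iid_sum_distr n \<nu>) t"
        by (simp add: char_std_normal_distribution)
    qed
  qed
  then show "\<exists>\<nu>. real_distribution \<nu> \<and> G0 = iid_sum_distr n \<nu>" using r by blast
qed

lemma G0_ID0: "G0 \<in> ID0_class"
  using G0_rd G0_ID G0_int2 G0_var by (simp add: ID0_class_def ID_class_def)

lemma G0_val: "measure G0 {x. \<bar>x - mean G0\<bar> < sqrt (var G0)} < 1"
proof (rule ccontr)
  interpret prob_space G0 using G0_rd by (rule ps_rd)
  have sN: "sets G0 = sets borel" using G0_rd by (rule sets_rd)
  have spN: "space G0 = UNIV" using sets_eq_imp_space_eq[OF sN] by simp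
  define U where "U = {x::real. \<bar>x\<bar> < 1}"
  have Us: "U \<in> sets G0" unfolding sN U_def by measurable
  assume "\<not> measure G0 {x. \<bar>x - mean G0\<bar> < sqrt (var G0)} < 1"
  then have "measure G0 U \<ge> 1" by (simp add: G0_mean G0_var U_def)
  then have "measure G0 U = 1" using prob_le_1[of U] by linarith
  then have "measure G0 (UNIV - U) = 0" using prob_compl[OF Us] by (simp add: spN)
  then have "UNIV - U \<in> null_sets G0" using Us spN
    by (simp add: emeasure_eq_measure null_sets_def sets.compl_sets)
  then have ae: "AE x in G0. x \<in> U" by (rule AE_I') auto
  have "(\<integral>x. x ^ 4 \<partial>G0) \<le> (\<integral>x. 1 \<partial>G0)"
  proof (rule integral_mono_AE)
    show "integrable G0 (\<lambda>x. x ^ 4)" by (rule integrable_std_normal_distribution_moment)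
    show "integrable G0 (\<lambda>x. 1 :: real)" by simp
    show "AE x in G0. x ^ 4 \<le> 1"
      using ae
    proof (rule AE_mp, intro AE_I2 impI)
      fix x :: real assume "x \<in> U"
      then have "\<bar>x\<bar> ^ 4 \<le> 1 ^ 4" unfolding U_def by (intro power_mono) auto
      moreover have "\<bar>x\<bar> ^ 4 = x ^ 4" by (rule power_even_abs) simp
      ultimately show "x ^ 4 \<le> 1" by simp
    qed
  qed
  moreover have "(\<integral>x. x ^ 4 \<partial>G0) = 3"
    using std_normal_distribution_even_moments(1)[of 2] by (simp add: fact_numeral)
  ultimately show False using prob_space spN by simp
qed

lemma ae_zero_var_prob1:
  assumes rd: "real_distribution \<mu>" and int: "integrable \<mu> (\<lambda>x. x\<^sup>2)" and v0: "var \<mu> = 0"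
    and sub: "\<And>x. x = mean \<mu> \<Longrightarrow> x \<in> A" and A: "A \<in> sets borel"
  shows "measure \<mu> A = 1"
proof -
  interpret prob_space \<mu> using rd by (rule ps_rd)
  have sN: "sets \<mu> = sets borel" using rd by (rule sets_rd)
  have isq: "integrable \<mu> (\<lambda>x. (x - mean \<mu>)\<^sup>2)" by (rule integrable_sq_shift[OF rd int])
  have "AE x in \<mu>. (x - mean \<mu>)\<^sup>2 = 0"
    using integral_nonneg_eq_0_iff_AE[OF isq] v0 by (simp add: var_def)
  then have "AE x in \<mu>. x \<in> A"
    by (rule AE_mp) (auto intro!: AE_I2 sub)
  then show ?thesis using AE_in_set_eq_1[of A] A sN by simp
qed

theorem theorem2p1:
  shows "P_I \<ge> P_I0 \<and> P_I0 > 0 \<and>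
    (\<exists>\<mu>\<in>ID0_class. P_I0 = measure \<mu> {x. \<bar>x - mean \<mu>\<bar> < sqrt (var \<mu>)})"
proof -
  define f where "f = (\<lambda>\<mu>. measure \<mu> {x. \<bar>x - mean \<mu>\<bar> < sqrt (var \<mu>)})"
  have PI0: "P_I0 = (INF \<mu>\<in>ID0_class. f \<mu>)" unfolding P_I0_def f_def ..
  have bdd: "bdd_below (f ` ID0_class)" unfolding f_def by (intro bdd_belowI[of _ 0]) auto
  have ne: "ID0_class \<noteq> {}" using G0_ID0 by blast
  have low: "P_I0 \<le> f \<mu>" if "\<mu> \<in> ID0_class" for \<mu> unfolding PI0 by (rule cINF_lower[OF bdd that])
  have lt1: "P_I0 < 1" using low[OF G0_ID0] G0_val by (simp add: f_def)
  have "\<forall>n. \<exists>\<mu>\<in>ID0_class. f \<mu> < P_I0 + 1 / real (Suc n)"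
  proof
    fix n
    have "(INF \<mu>\<in>ID0_class. f \<mu>) < P_I0 + 1 / real (Suc n)" unfolding PI0[symmetric] by simp
    then show "\<exists>\<mu>\<in>ID0_class. f \<mu> < P_I0 + 1 / real (Suc n)" using cINF_less_iff[OF ne bdd] by blast
  qed
  then obtain \<mu> where \<mu>mem: "\<And>n. \<mu> n \<in> ID0_class" and \<mu>up: "\<And>n. f (\<mu> n) < P_I0 + 1 / real (Suc n)"
    by metis
  have fconv: "(\<lambda>n. f (\<mu> n)) \<longlonglongrightarrow> P_I0"
  proof (rule tendsto_sandwich[where f="\<lambda>_. P_I0" and h="\<lambda>n. P_I0 + 1 / real (Suc n)"])
    show "\<forall>\<^sub>F n in sequentially. P_I0 \<le> f (\<mu> n)" using low[OF \<mu>mem] by simp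
    show "\<forall>\<^sub>F n in sequentially. f (\<mu> n) \<le> P_I0 + 1 / real (Suc n)" using \<mu>up by (intro always_eventually allI less_imp_le)
    show "(\<lambda>_. P_I0) \<longlonglongrightarrow> P_I0" by simp
    have "(\<lambda>n. 1 / real (Suc n)) \<longlonglongrightarrow> 0" using LIMSEQ_Suc[OF lim_1_over_n] by simp
    then show "(\<lambda>n. P_I0 + 1 / real (Suc n)) \<longlonglongrightarrow> P_I0" using tendsto_add[OF tendsto_const[of P_I0]] by fastforce
  qed
  define \<nu> where "\<nu> = (\<lambda>n. distr (\<mu> n) borel (\<lambda>x. (1 / sqrt (var (\<mu> n))) * x + (- mean (\<mu> n) / sqrt (var (\<mu> n)))))"
  note nz = normalize[OF \<mu>mem, folded \<nu>_def]
  have \<nu>rd: "\<And>n. real_distribution (\<nu> n)" and \<nu>id: "\<And>n. infinitely_divisible (\<nu> n)"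
    and \<nu>int: "\<And>n. integrable (\<nu> n) (\<lambda>x. x\<^sup>2)" and \<nu>2: "\<And>n. (\<integral>x. x\<^sup>2 \<partial>\<nu> n) = 1"
    and \<nu>1: "\<And>n. (\<integral>x. x \<partial>\<nu> n) = 0" and \<nu>f: "\<And>n. measure (\<nu> n) {x. \<bar>x\<bar> < 1} = f (\<mu> n)"
    using nz by (auto simp: f_def \<nu>_def)
  have tight: "tight \<nu>"
    unfolding tight_def
  proof (intro conjI allI impI)
    show "Distribution_Functions.real_distribution (\<nu> n)" for n using \<nu>rd rd_iff by blast
    fix \<epsilon> :: real assume e: "\<epsilon> > 0"
    define c where "c = 1 + 1 / \<epsilon>"
    have c1: "c > 1" using e by (simp add: c_def)
    have "1 / \<epsilon> < c" by (simp add: c_def)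
    then have "1 / c < \<epsilon>" using e c1 by (simp add: field_simps)
    moreover have "1 / c\<^sup>2 \<le> 1 / c" using c1 by (simp add: power2_eq_square field_simps)
    ultimately have cc: "1 / c\<^sup>2 < \<epsilon>" by linarith
    show "\<exists>a b. a < b \<and> (\<forall>n. 1 - \<epsilon> < measure (\<nu> n) {a<..b})"
    proof (intro exI conjI allI)
      show "- c < c" using c1 by simp
      fix n
      interpret N: prob_space "\<nu> n" using \<nu>rd ps_rd by blast
      have sN: "sets (\<nu> n) = sets borel" using \<nu>rd sets_rd by blast
      have spN: "space (\<nu> n) = UNIV" using \<nu>rd spc_rd by blast
      have "measure (\<nu> n) {x. c \<le> \<bar>x\<bar>} \<le> (\<integral>x. x\<^sup>2 \<partial>\<nu> n) / c\<^sup>2"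
        using c1 by (intro cheb \<nu>rd \<nu>int) simp
      then have t: "measure (\<nu> n) {x. c \<le> \<bar>x\<bar>} < \<epsilon>" using cc \<nu>2[of n] by simp
      have Cs: "{x. c \<le> \<bar>x\<bar>} \<in> sets (\<nu> n)" unfolding sN by measurable
      have "measure (\<nu> n) (UNIV - {x. c \<le> \<bar>x\<bar>}) = 1 - measure (\<nu> n) {x. c \<le> \<bar>x\<bar>}"
        using N.prob_compl[OF Cs] spN by simp
      moreover have "measure (\<nu> n) (UNIV - {x. c \<le> \<bar>x\<bar>}) \<le> measure (\<nu> n) {-c<..c}"
        by (rule N.finite_measure_mono) (auto simp: sN)
      ultimately show "1 - \<epsilon> < measure (\<nu> n) {-c<..c}" using t by linarith
    qed
  qed
  moreover have "strict_mono (id :: nat \<Rightarrow> nat)" by (simp add: strict_mono_def)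
  ultimately obtain r Y where r: "strict_mono r" "Distribution_Functions.real_distribution Y"
    "weak_conv_m (\<nu> \<circ> id \<circ> r) Y"
    using tight_imp_convergent_subsubsequence by blast
  have rdY: "real_distribution Y" using r(2) rd_iff by blast
  have wc: "weak_conv_m (\<nu> \<circ> r) Y" using r(3) by simp
  have rdr: "\<And>n. real_distribution ((\<nu> \<circ> r) n)" using \<nu>rd by simp
  have idY: "infinitely_divisible Y"
    by (rule ID_closed[OF rdr _ rdY wc, where C=1]) (use \<nu>id \<nu>int \<nu>2 in simp_all)
  have mom: "integrable Y (\<lambda>x. x\<^sup>2) \<and> (\<integral>x. x\<^sup>2 \<partial>Y) \<le> 1 \<and> (\<integral>x. x \<partial>Y) = 0"
    by (rule limit_moments[OF rdr rdY wc]) (use \<nu>int \<nu>2 \<nu>1 in simp_all)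
  have "(\<lambda>j. measure ((\<nu> \<circ> r) j) {x. \<bar>x\<bar> < 1}) \<longlonglongrightarrow> P_I0"
    using LIMSEQ_subseq_LIMSEQ[OF fconv r(1)] by (simp add: \<nu>f comp_def)
  then have opn: "measure Y {x. \<bar>x\<bar> < 1} \<le> P_I0" by (rule open_limit[OF rdr rdY wc])
  have mY: "mean Y = 0" using mom by (simp add: mean_def)
  have vY: "var Y = (\<integral>x. x\<^sup>2 \<partial>Y)" by (simp add: var_def mY)
  have vpos: "var Y > 0"
  proof (rule ccontr)
    assume "\<not> var Y > 0"
    then have v0: "var Y = 0" using var_nonneg[of Y] by linarith
    have "measure Y {x. \<bar>x\<bar> < 1} = 1"
      by (rule ae_zero_var_prob1[OF rdY _ v0]) (use mom mY in auto)
    then show False using opn lt1 by simp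
  qed
  have YI0: "Y \<in> ID0_class" using rdY idY mom vpos by (simp add: ID0_class_def ID_class_def)
  have "f Y \<le> measure Y {x. \<bar>x\<bar> < 1}"
  proof -
    interpret prob_space Y using rdY by (rule ps_rd)
    have sN: "sets Y = sets borel" using rdY by (rule sets_rd)
    have sq: "sqrt (var Y) \<le> 1" using mom vY by simp
    have sub: "{x. \<bar>x - 0\<bar> < sqrt (var Y)} \<subseteq> {x. \<bar>x\<bar> < 1}"
    proof
      fix x assume "x \<in> {x. \<bar>x - 0\<bar> < sqrt (var Y)}"
      then have "\<bar>x\<bar> < sqrt (var Y)" by simp
      then have "\<bar>x\<bar> < 1" using sq by linarith
      then show "x \<in> {x. \<bar>x\<bar> < 1}" by simp
    qed
    show ?thesis unfolding f_def mY by (rule finite_measure_mono[OF sub]) (simp add: sN)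
  qed
  then have eq: "P_I0 = f Y" using opn low[OF YI0] by simp
  have pos: "P_I0 > 0" using pos_f[OF YI0] eq by (simp add: f_def)
  have PI: "P_I0 \<le> P_I"
    unfolding P_I_def
  proof (rule cINF_greatest)
    show "ID_class \<noteq> {}" using G0_ID0 by (auto simp: ID0_class_def)
    fix \<mu> assume mem: "\<mu> \<in> ID_class"
    then have rd: "real_distribution \<mu>" and int: "integrable \<mu> (\<lambda>x. x\<^sup>2)"
      by (auto simp: ID_class_def)
    interpret prob_space \<mu> using rd by (rule ps_rd)
    have sN: "sets \<mu> = sets borel" using rd by (rule sets_rd)
    show "P_I0 \<le> measure \<mu> {x. \<bar>x - mean \<mu>\<bar> \<le> sqrt (var \<mu>)}"
    proof (cases "var \<mu> > 0")
      case True
      then have "\<mu> \<in> ID0_class" using mem by (simp add: ID0_class_def)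
      then have "P_I0 \<le> f \<mu>" by (rule low)
      also have "f \<mu> \<le> measure \<mu> {x. \<bar>x - mean \<mu>\<bar> \<le> sqrt (var \<mu>)}"
        unfolding f_def by (intro finite_measure_mono) (auto simp: sN)
      finally show ?thesis .
    next
      case False
      then have v0: "var \<mu> = 0" using var_nonneg[of \<mu>] by linarith
      have "measure \<mu> {x. \<bar>x - mean \<mu>\<bar> \<le> sqrt (var \<mu>)} = 1"
        by (rule ae_zero_var_prob1[OF rd int v0]) (auto simp: v0)
      then show ?thesis using lt1 by simp
    qed
  qed
  show ?thesis using PI pos eq YI0 by (auto simp: f_def)
qed

end
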